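(* Under Assumption 1, for every $t\in\{0,1,\dots,T\}$, every risk-aversion vector $\beta$, and every $r\in\mathcal R$, the map $p\mapsto V_{t,T}(r,p\,|\,\beta)$ is Lipschitz continuous on $\mathbb R$.
   Context: Model (dynamic EV charging). Fix a horizon $T\in\{1,2,\dots\}$, a battery capacity $R_{\max}>0$, a maximal charge per period $x_{\max}>0$, an initial charge $R_0\in[0,R_{\max}]$, an access fee $c_f\in\mathbb R$, a reference price $p_{\mathrm{ref}}>0$, a constant $\gamma_h\ge 0$, a deterministic seasonality function $g:\mathbb R\to\mathbb R$, and price parameters $\kappa_Y>0$, $\mu_Y\in\mathbb R$, $\sigma_Y>0$, $\lambda_J\in(0,1)$, $\mu_J\in\mathbb R$, $\sigma_J>0$. Spot prices are $P_t=g(t)+Y_t$ with $Y_{t+1}=Y_te^{-\kappa_Y}+\mu_Y(1-e^{-\kappa_Y})+\xi_{t+1}+X_{t+1}J_{t+1}$, where $(\xi_t)$ are i.i.d. $\mathcal N\big(0,\sigma_Y^2(1-e^{-2\kappa_Y})/(2\kappa_Y)\big)$, $(X_t)$ are i.i.d. Bernoulli$(\lambda_J)$, $(J_t)$ are i.i.d. $\mathcal N(\mu_J,\sigma_J^2)$, all mutually independent. Define $\psi_{t+1}=g(t+1)-g(t)e^{-\kappa_Y}+\mu_Y(1-e^{-\kappa_Y})+\xi_{t+1}+X_{t+1}J_{t+1}$ and $\psi_{t+1,Y}=\psi_{t+1}-g(t+1)$ (so given $P_t=p$, $P_{t+1}$ has the law of $pe^{-\kappa_Y}+\psi_{t+1}$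 and $Y_{t+1}$ that of $pe^{-\kappa_Y}+\psi_{t+1,Y}$). Let $\mathcal R=[0,R_{\max}]$, $\mathcal X(r)=[0,\min\{R_{\max}-r,x_{\max}\}]$, and shortage $h(r)=\min\{R_0+Tx_{\max},R_{\max}\}-r$. Let $\gamma_Y:\mathbb R\to(0,\infty)$ be a compensation function. Assumption 1: $\gamma_Y$ is positive, strictly increasing, and $L_{\gamma_Y}$-Lipschitz continuous with $L_{\gamma_Y}\le p_{\mathrm{ref}}^{-1}e^{2\kappa_Y}$. Risk measures. For $\alpha\in(0,1)$: $\mathrm{VaR}_\alpha(X)=\inf\{u:\mathbf P(X\le u)>\alpha\}$, $\mathrm{CVaR}_\alpha(X)=\inf_u\{u+(1-\alpha)^{-1}\mathbf E[(X-u)^+]\}$. For $\beta_t=(\lambda_t,\alpha_t)\in[0,1]\times(0,1)$, $\rho_{\beta_t}(X)=(1-\lambda_t)\mathbf E[X]+\lambda_t\mathrm{CVaR}_{\alpha_t}(X)$. A risk-aversion vector is $\beta=(\lambda_0,\alpha_0,\dots,\lambda_T,\alpha_T)$. Value functions. For $r\in\mathcal R$, $p\in\mathbb R$: $V_{T,T}(r,p\,|\,\beta)=\rho_{\beta_T}\big[\big(1+\gamma_h h(r)+\gamma_Y(pe^{-\kappa_Y}+\psi_{T+1,Y})\big)h(r)p_{\mathrm{ref}}\big]$, and for $t=T-1,\dots,0$: $\tilde V_{t,T}(r,p\,|\,\beta)=\rho_{\beta_t}\big[V_{t+1,T}(r,pe^{-\kappa_Y}+\psi_{t+1}\,|\,\beta)\big]$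 (post-decision value function) and $V_{t,T}(r,p\,|\,\beta)=\min_{x\in\mathcal X(r)}\{xp-c_f+\tilde V_{t,T}(r+x,p\,|\,\beta)\}$. *)

theory Defs
  imports "HOL-Probability.Probability"
begin

definition expect :: "'a measure \<Rightarrow> ('a \<Rightarrow> real) \<Rightarrow> real" where
  "expect M X = (\<integral>\<omega>. X \<omega> \<partial>M)"

definition VaR :: "'a measure \<Rightarrow> real \<Rightarrow> ('a \<Rightarrow> real) \<Rightarrow> real" where
  "VaR M \<alpha> X = Inf {u. measure M {\<omega> \<in> space M. X \<omega> \<le> u} > \<alpha>}"

definition CVaR :: "'a measure \<Rightarrow> real \<Rightarrow> ('a \<Rightarrow> real) \<Rightarrow> real" where
  "CVaR M \<alpha> X = (INF u. u + (1 / (1 - \<alpha>)) * expect M (\<lambda>\<omega>. max (X \<omega> - u) 0))"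

definition rho :: "'a measure \<Rightarrow> real \<Rightarrow> real \<Rightarrow> ('a \<Rightarrow> real) \<Rightarrow> real" where
  "rho M l \<alpha> X = (1 - l) * expect M X + l * CVaR M \<alpha> X"

record evparams =
  ev_T :: nat
  ev_Rmax :: real
  ev_xmax :: real
  ev_R0 :: real
  ev_cf :: real
  ev_pref :: real
  ev_gh :: real
  ev_g :: "real \<Rightarrow> real"
  ev_kY :: real
  ev_muY :: real
  ev_sigY :: real
  ev_lamJ :: real
  ev_muJ :: real
  ev_sigJ :: real
  ev_gY :: "real \<Rightarrow> real"

definition xi_sd :: "evparams \<Rightarrow> real" where
  "xi_sd P = sqrt (ev_sigY P ^ 2 * (1 - exp (- 2 * ev_kY P)) / (2 * ev_kY P))"

definition noise_space :: "evparams \<Rightarrow> (real \<times> bool \<times> real) measure" where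
  "noise_space P =
     density lborel (normal_density 0 (xi_sd P))
     \<Otimes>\<^sub>M (measure_pmf (bernoulli_pmf (ev_lamJ P))
     \<Otimes>\<^sub>M density lborel (normal_density (ev_muJ P) (ev_sigJ P)))"

definition noise :: "(real \<times> bool \<times> real) \<Rightarrow> real" where
  "noise \<omega> = (case \<omega> of (\<xi>, x, j) \<Rightarrow> \<xi> + (if x then j else 0))"

definition psi :: "evparams \<Rightarrow> nat \<Rightarrow> (real \<times> bool \<times> real) \<Rightarrow> real" where
  "psi P t \<omega> = ev_g P (real t + 1) - ev_g P (real t) * exp (- ev_kY P)
      + ev_muY P * (1 - exp (- ev_kY P)) + noise \<omega>"

definition psiY :: "evparams \<Rightarrow> nat \<Rightarrow> (real \<times> bool \<times> real) \<Rightarrow> real" where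
  "psiY P t \<omega> = psi P t \<omega> - ev_g P (real t + 1)"

definition shortage :: "evparams \<Rightarrow> real \<Rightarrow> real" where
  "shortage P r = min (ev_R0 P + real (ev_T P) * ev_xmax P) (ev_Rmax P) - r"

section \<open>Value functions; beta given by lam t = lambda_t and alph t = alpha_t\<close>

text \<open>W n = V_{T-n,T}, defined by backward recursion on the number n of remaining steps.\<close>
primrec W :: "evparams \<Rightarrow> (nat \<Rightarrow> real) \<Rightarrow> (nat \<Rightarrow> real) \<Rightarrow> nat \<Rightarrow> real \<Rightarrow> real \<Rightarrow> real" where
  "W P lam alph 0 r p =
     rho (noise_space P) (lam (ev_T P)) (alph (ev_T P))
       (\<lambda>\<omega>. (1 + ev_gh P * shortage P r
              + ev_gY P (p * exp (- ev_kY P) + psiY P (ev_T P) \<omega>)) * shortage P r * ev_pref P)"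
| "W P lam alph (Suc n) r p =
     (let t = ev_T P - Suc n;
          Vpost = (\<lambda>r'. rho (noise_space P) (lam t) (alph t)
                     (\<lambda>\<omega>. W P lam alph n r' (p * exp (- ev_kY P) + psi P t \<omega>)))
      in (INF x \<in> {0 .. min (ev_Rmax P - r) (ev_xmax P)}. x * p - ev_cf P + Vpost (r + x)))"

definition Vpost :: "evparams \<Rightarrow> (nat \<Rightarrow> real) \<Rightarrow> (nat \<Rightarrow> real) \<Rightarrow> nat \<Rightarrow> real \<Rightarrow> real \<Rightarrow> real" where
  "Vpost P lam alph t r p = rho (noise_space P) (lam t) (alph t)
      (\<lambda>\<omega>. W P lam alph (ev_T P - Suc t) r (p * exp (- ev_kY P) + psi P t \<omega>))"

definition V :: "evparams \<Rightarrow> (nat \<Rightarrow> real) \<Rightarrow> (nat \<Rightarrow> real) \<Rightarrow> nat \<Rightarrow> real \<Rightarrow> real \<Rightarrow> real" where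
  "V P lam alph t r p = W P lam alph (ev_T P - t) r p"

definition valid_params :: "evparams \<Rightarrow> bool" where
  "valid_params P \<longleftrightarrow> ev_T P \<ge> 1 \<and> ev_Rmax P > 0 \<and> ev_xmax P > 0
     \<and> 0 \<le> ev_R0 P \<and> ev_R0 P \<le> ev_Rmax P \<and> ev_pref P > 0 \<and> ev_gh P \<ge> 0
     \<and> ev_kY P > 0 \<and> ev_sigY P > 0 \<and> 0 < ev_lamJ P \<and> ev_lamJ P < 1 \<and> ev_sigJ P > 0
     \<and> (\<forall>y. ev_gY P y > 0)"

definition assumption1 :: "evparams \<Rightarrow> bool" where
  "assumption1 P \<longleftrightarrow> (\<forall>y. ev_gY P y > 0) \<and> strict_mono (ev_gY P)
     \<and> (\<exists>L. L-lipschitz_on UNIV (ev_gY P) \<and> L \<le> exp (2 * ev_kY P) / ev_pref P)"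

definition risk_aversion :: "evparams \<Rightarrow> (nat \<Rightarrow> real) \<Rightarrow> (nat \<Rightarrow> real) \<Rightarrow> bool" where
  "risk_aversion P lam alph \<longleftrightarrow>
     (\<forall>t \<le> ev_T P. 0 \<le> lam t \<and> lam t \<le> 1 \<and> 0 < alph t \<and> alph t < 1)"

end

theory Submission imports Defs begin


lemma int_fst:
  fixes f :: "'a \<Rightarrow> real"
  assumes "prob_space M2" "integrable M1 f"
  shows "integrable (M1 \<Otimes>\<^sub>M M2) (\<lambda>x. f (fst x))"
proof -
  interpret prob_space M2 by fact
  have "integrable (distr (M1 \<Otimes>\<^sub>M M2) M1 fst) f" using assms(2) by (simp add: distr_pair_fst)
  then show ?thesis by (rule integrable_distr[rotated]) simp
qed

lemma int_snd:
  fixes f :: "'b \<Rightarrow> real"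
  assumes "prob_space M1" "prob_space M2" "integrable M2 f"
  shows "integrable (M1 \<Otimes>\<^sub>M M2) (\<lambda>x. f (snd x))"
proof -
  interpret p1: prob_space M1 by fact
  interpret p2: prob_space M2 by fact
  interpret pair_sigma_finite M2 M1 by unfold_locales
  have "integrable (M2 \<Otimes>\<^sub>M M1) (\<lambda>x. f (fst x))" using int_fst assms by blast
  from integrable_product_swap[OF this] show ?thesis
    by (simp add: case_prod_unfold)
qed

lemma xi_sd_pos: "valid_params P \<Longrightarrow> xi_sd P > 0"
  unfolding xi_sd_def valid_params_def
  by (auto intro!: divide_pos_pos mult_pos_pos)

lemma prob_noise: "valid_params P \<Longrightarrow> prob_space (noise_space P)"
  unfolding noise_space_def
  by (intro prob_space_pair prob_space_normal_density prob_space_measure_pmf)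
     (auto simp: valid_params_def xi_sd_pos)

lemma meas_noise[measurable]: "noise \<in> borel_measurable (noise_space P)"
  unfolding noise_space_def noise_def by (simp add: case_prod_unfold) measurable

lemma int_normal_id: "s > 0 \<Longrightarrow> integrable (density lborel (normal_density m s)) (\<lambda>x. x)"
  by (subst integrable_density) (auto simp: normal_density_nonneg integrable_normal_moment_nz_1 mult.commute[of _ "normal_density m s _"])

lemma int_noise: "valid_params P \<Longrightarrow> integrable (noise_space P) noise"
proof -
  assume v: "valid_params P"
  let ?M1 = "density lborel (normal_density 0 (xi_sd P))"
  let ?M2 = "measure_pmf (bernoulli_pmf (ev_lamJ P))"
  let ?M3 = "density lborel (normal_density (ev_muJ P) (ev_sigJ P))"
  have p1: "prob_space ?M1" "prob_space ?M3" using v by (auto intro: prob_space_normal_density simp: valid_params_def xi_sd_pos)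
  have p23: "prob_space (?M2 \<Otimes>\<^sub>M ?M3)"
    by (intro prob_space_pair prob_space_measure_pmf p1)
  have a: "integrable (?M1 \<Otimes>\<^sub>M (?M2 \<Otimes>\<^sub>M ?M3)) (\<lambda>x. fst x)"
    using int_fst[OF p23 int_normal_id[OF xi_sd_pos[OF v]]] by simp
  have b0: "integrable (?M2 \<Otimes>\<^sub>M ?M3) (\<lambda>x. (if fst x then snd x else 0))"
  proof (rule Bochner_Integration.integrable_bound)
    show "integrable (?M2 \<Otimes>\<^sub>M ?M3) (\<lambda>x. snd x)"
      using int_snd[OF prob_space_measure_pmf[of "bernoulli_pmf (ev_lamJ P)"] p1(2) int_normal_id] v by (simp add: valid_params_def)
  qed (auto split: if_splits)
  have b: "integrable (?M1 \<Otimes>\<^sub>M (?M2 \<Otimes>\<^sub>M ?M3)) (\<lambda>x. (if fst (snd x) then snd (snd x) else 0))"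
    using int_snd[OF p1(1) p23 b0] by simp
  have "integrable (?M1 \<Otimes>\<^sub>M (?M2 \<Otimes>\<^sub>M ?M3)) (\<lambda>x. fst x + (if fst (snd x) then snd (snd x) else 0))"
    using a b by (rule Bochner_Integration.integrable_add)
  then show ?thesis unfolding noise_space_def noise_def by (simp add: case_prod_unfold)
qed



lemma cvar_lower:
  assumes "prob_space M" "integrable M Z" "0 < \<alpha>" "\<alpha> < 1"
  shows "expect M Z \<le> u + (1 / (1 - \<alpha>)) * expect M (\<lambda>\<omega>. max (Z \<omega> - u) 0)"
proof -
  interpret prob_space M by fact
  have iZ: "integrable M (\<lambda>\<omega>. max (Z \<omega> - u) 0)" using assms(2) by auto
  have e1: "expect M (\<lambda>\<omega>. max (Z \<omega> - u) 0) \<ge> expect M Z - u"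
  proof -
    have "expect M (\<lambda>\<omega>. Z \<omega> - u) \<le> expect M (\<lambda>\<omega>. max (Z \<omega> - u) 0)"
      unfolding expect_def by (rule integral_mono) (use assms(2) iZ in auto)
    moreover have "expect M (\<lambda>\<omega>. Z \<omega> - u) = expect M Z - u"
      unfolding expect_def using assms(2) by (simp add: prob_space)
    ultimately show ?thesis by simp
  qed
  have e2: "expect M (\<lambda>\<omega>. max (Z \<omega> - u) 0) \<ge> 0"
    unfolding expect_def by (rule Bochner_Integration.integral_nonneg) auto
  have k: "1 / (1 - \<alpha>) \<ge> 1" using assms by (simp add: field_simps)
  show ?thesis
  proof (cases "u \<ge> expect M Z")
    case True then show ?thesis using e2 k by (smt (verit) mult_nonneg_nonneg)
  next
    case False
    have "(1 / (1 - \<alpha>)) * expect M (\<lambda>\<omega>. max (Z \<omega> - u) 0) \<ge> 1 * (expect M Z - u)"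
      using e1 k False assms(4) by (intro mult_mono) auto
    then show ?thesis by simp
  qed
qed

lemma rho_one_sided:
  assumes "prob_space M" "integrable M X" "integrable M Y"
    and le: "\<And>\<omega>. \<omega> \<in> space M \<Longrightarrow> X \<omega> \<le> Y \<omega> + c"
    and "0 \<le> l" "l \<le> 1" "0 < \<alpha>" "\<alpha> < 1"
  shows "rho M l \<alpha> X \<le> rho M l \<alpha> Y + c"
proof -
  interpret prob_space M by fact
  define k where "k = 1 / (1 - \<alpha>)"
  have kpos: "k > 0" using assms unfolding k_def by simp
  have E: "expect M X \<le> expect M Y + c"
  proof -
    have "expect M X \<le> expect M (\<lambda>\<omega>. Y \<omega> + c)"
      unfolding expect_def by (rule integral_mono) (use assms in auto)
    also have "\<dots> = expect M Y + c" unfolding expect_def using assms(3) by (simp add: prob_space)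
    finally show ?thesis .
  qed
  have C: "CVaR M \<alpha> X \<le> CVaR M \<alpha> Y + c"
  proof -
    have bX: "bdd_below (range (\<lambda>u. u + k * expect M (\<lambda>\<omega>. max (X \<omega> - u) 0)))"
      using cvar_lower[OF assms(1,2,7,8)] unfolding k_def by (intro bdd_belowI2) auto
    have "CVaR M \<alpha> X - c \<le> u + k * expect M (\<lambda>\<omega>. max (Y \<omega> - u) 0)" for u
    proof -
      have "CVaR M \<alpha> X \<le> (u + c) + k * expect M (\<lambda>\<omega>. max (X \<omega> - (u + c)) 0)"
        unfolding CVaR_def k_def[symmetric] by (rule cINF_lower[OF bX]) simp
      also have "expect M (\<lambda>\<omega>. max (X \<omega> - (u + c)) 0) \<le> expect M (\<lambda>\<omega>. max (Y \<omega> - u) 0)"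
        unfolding expect_def
      proof (rule integral_mono)
        show "integrable M (\<lambda>\<omega>. max (X \<omega> - (u + c)) 0)" "integrable M (\<lambda>\<omega>. max (Y \<omega> - u) 0)"
          using assms(2,3) by auto
      qed (use le in \<open>fastforce\<close>)
      hence "(u + c) + k * expect M (\<lambda>\<omega>. max (X \<omega> - (u + c)) 0) \<le> (u + c) + k * expect M (\<lambda>\<omega>. max (Y \<omega> - u) 0)"
        using kpos by simp
      finally show ?thesis by simp
    qed
    hence "CVaR M \<alpha> X - c \<le> CVaR M \<alpha> Y"
      unfolding CVaR_def k_def[symmetric] by (intro cINF_greatest) auto
    thus ?thesis by simp
  qed
  have "rho M l \<alpha> X = (1 - l) * expect M X + l * CVaR M \<alpha> X" by (simp add: rho_def)
  also have "\<dots> \<le> (1 - l) * (expect M Y + c) + l * (CVaR M \<alpha> Y + c)"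
    using E C assms by (intro add_mono mult_left_mono) auto
  also have "\<dots> = rho M l \<alpha> Y + c" by (simp add: rho_def algebra_simps)
  finally show ?thesis .
qed

lemma rho_lip:
  assumes "prob_space M" "integrable M X" "integrable M Y"
    and le: "\<And>\<omega>. \<omega> \<in> space M \<Longrightarrow> \<bar>X \<omega> - Y \<omega>\<bar> \<le> c"
    and "0 \<le> l" "l \<le> 1" "0 < \<alpha>" "\<alpha> < 1"
  shows "\<bar>rho M l \<alpha> X - rho M l \<alpha> Y\<bar> \<le> c"
proof -
  have "rho M l \<alpha> X \<le> rho M l \<alpha> Y + c"
    by (rule rho_one_sided) (use assms in \<open>auto dest: le simp: abs_le_iff\<close>)
  moreover have "rho M l \<alpha> Y \<le> rho M l \<alpha> X + c"
    by (rule rho_one_sided) (use assms in \<open>auto dest: le simp: abs_le_iff\<close>)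
  ultimately show ?thesis by linarith
qed



definition lipR :: "real \<Rightarrow> (real \<Rightarrow> real) \<Rightarrow> bool" where
  "lipR K g \<longleftrightarrow> 0 \<le> K \<and> (\<forall>p q. \<bar>g p - g q\<bar> \<le> K * \<bar>p - q\<bar>)"

lemma lipR_iff: "K-lipschitz_on UNIV g \<longleftrightarrow> lipR K g"
  by (simp add: lipschitz_on_def lipR_def dist_real_def)

lemma Inf_unbdd: "\<not> bdd_below (X :: real set) \<Longrightarrow> Inf X = - (LEAST z::real. False)"
proof -
  assume nb: "\<not> bdd_below X"
  have "\<not> (\<exists>z. \<forall>x\<in>uminus ` X. x \<le> z)"
  proof
    assume "\<exists>z. \<forall>x\<in>uminus ` X. x \<le> z"
    then obtain z where "\<forall>x\<in>X. -x \<le> z" by auto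
    hence "\<forall>x\<in>X. -z \<le> x" by force
    with nb show False unfolding bdd_below_def by blast
  qed
  hence "(\<lambda>z::real. \<forall>x\<in>uminus ` X. x \<le> z) = (\<lambda>z. False)" by (intro ext iffI) auto
  thus ?thesis unfolding Inf_real_def Sup_real_def by simp
qed

lemma inf_lip:
  fixes f :: "'i \<Rightarrow> real \<Rightarrow> real"
  assumes K: "0 \<le> K" and l: "\<And>i. i \<in> S \<Longrightarrow> lipR K (f i)"
  shows "lipR K (\<lambda>p. INF i\<in>S. f i p)"
proof (cases "S = {}")
  case True then show ?thesis using K by (simp add: lipR_def)
next
  case ne: False
  have fl: "f i p \<le> f i q + K * \<bar>p - q\<bar>" if "i \<in> S" for i p q
    using l[OF that] unfolding lipR_def by (smt (verit) abs_le_iff)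
  show ?thesis
  proof (cases "bdd_below ((\<lambda>i. f i 0) ` S)")
    case True
    then obtain m where m: "\<And>i. i \<in> S \<Longrightarrow> m \<le> f i 0" unfolding bdd_below_def by auto
    have bb: "bdd_below ((\<lambda>i. f i p) ` S)" for p
    proof (rule bdd_belowI2)
      fix i assume "i \<in> S"
      from fl[OF this, of 0 p] m[OF this] show "m - K * \<bar>0 - p\<bar> \<le> f i p" by simp
    qed
    have one: "(INF i\<in>S. f i p) \<le> (INF i\<in>S. f i q) + K * \<bar>p - q\<bar>" for p q
    proof -
      have "(INF i\<in>S. f i p) - K * \<bar>p - q\<bar> \<le> (INF i\<in>S. f i q)"
      proof (rule cINF_greatest[OF ne])
        fix i assume i: "i \<in> S"
        have "(INF i\<in>S. f i p) \<le> f i p" by (rule cINF_lower[OF bb i])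
        with fl[OF i, of p q] show "(INF i\<in>S. f i p) - K * \<bar>p - q\<bar> \<le> f i q" by simp
      qed
      thus ?thesis by simp
    qed
    show ?thesis unfolding lipR_def
    proof (intro conjI allI K)
      fix p q
      have "(INF i\<in>S. f i q) \<le> (INF i\<in>S. f i p) + K * \<bar>p - q\<bar>"
        using one[of q p] by (simp add: abs_minus_commute)
      with one[of p q] show "\<bar>(INF i\<in>S. f i p) - (INF i\<in>S. f i q)\<bar> \<le> K * \<bar>p - q\<bar>"
        by (simp add: abs_le_iff)
    qed
  next
    case False
    have nb: "\<not> bdd_below ((\<lambda>i. f i p) ` S)" for p
    proof
      assume "bdd_below ((\<lambda>i. f i p) ` S)"
      then obtain m where m: "\<And>i. i \<in> S \<Longrightarrow> m \<le> f i p" unfolding bdd_below_def by auto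
      have "bdd_below ((\<lambda>i. f i 0) ` S)"
      proof (rule bdd_belowI2)
        fix i assume "i \<in> S"
        from fl[OF this, of p 0] m[OF this] show "m - K * \<bar>p - 0\<bar> \<le> f i 0" by simp
      qed
      with False show False by blast
    qed
    show ?thesis unfolding lipR_def using K Inf_unbdd[OF nb] by simp
  qed
qed

lemma int_lipcomp:
  assumes v: "valid_params P" and g: "lipR L g"
  shows "integrable (noise_space P) (\<lambda>\<omega>. g (a + noise \<omega>))"
proof -
  have c: "continuous_on UNIV g" using g lipschitz_on_continuous_on lipR_iff by blast
  have [measurable]: "g \<in> borel_measurable borel" using borel_measurable_continuous_onI[OF c] .
  interpret prob_space "noise_space P" using prob_noise[OF v] .
  have in1: "integrable (noise_space P) (\<lambda>\<omega>. \<bar>g 0\<bar> + L * (\<bar>a\<bar> + \<bar>noise \<omega>\<bar>))"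
    using int_noise[OF v] by (intro Bochner_Integration.integrable_add integrable_mult_right) auto
  show ?thesis
  proof (rule Bochner_Integration.integrable_bound[OF in1])
    show "(\<lambda>\<omega>. g (a + noise \<omega>)) \<in> borel_measurable (noise_space P)" by measurable
    show "AE x in noise_space P. norm (g (a + noise x)) \<le> norm (\<bar>g 0\<bar> + L * (\<bar>a\<bar> + \<bar>noise x\<bar>))"
    proof (rule AE_I2)
      fix x
      have L0: "L \<ge> 0" using g lipR_def by simp
      have "\<bar>g (a + noise x) - g 0\<bar> \<le> L * \<bar>a + noise x - 0\<bar>" using g lipR_def by blast
      moreover have "L * \<bar>a + noise x\<bar> \<le> L * (\<bar>a\<bar> + \<bar>noise x\<bar>)"
        using L0 by (intro mult_left_mono) auto
      moreover have "0 \<le> L * (\<bar>a\<bar> + \<bar>noise x\<bar>)" using L0 by simp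
      ultimately show "norm (g (a + noise x)) \<le> norm (\<bar>g 0\<bar> + L * (\<bar>a\<bar> + \<bar>noise x\<bar>))"
        by (smt (verit) real_norm_def)
    qed
  qed
qed

lemma psi_eq: "\<exists>c. \<forall>\<omega>. psi P t \<omega> = c + noise \<omega>"
  unfolding psi_def by auto

lemma psiY_eq: "\<exists>c. \<forall>\<omega>. psiY P t \<omega> = c + noise \<omega>"
  unfolding psiY_def psi_def by (intro exI[of _ "ev_g P (real t + 1) - ev_g P (real t) * exp (- ev_kY P)
      + ev_muY P * (1 - exp (- ev_kY P)) - ev_g P (real t + 1)"]) auto

lemma int_lip_psi:
  assumes v: "valid_params P" and g: "lipR L g"
  shows "integrable (noise_space P) (\<lambda>\<omega>. g (b + psi P t \<omega>))"
proof -
  obtain c where c: "\<And>\<omega>. psi P t \<omega> = c + noise \<omega>" using psi_eq by blast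
  show ?thesis using int_lipcomp[OF v g, of "b + c"] by (simp add: c add.assoc)
qed

lemma int_lip_psiY:
  assumes v: "valid_params P" and g: "lipR L g"
  shows "integrable (noise_space P) (\<lambda>\<omega>. g (b + psiY P t \<omega>))"
proof -
  obtain c where c: "\<And>\<omega>. psiY P t \<omega> = c + noise \<omega>" using psiY_eq by blast
  show ?thesis using int_lipcomp[OF v g, of "b + c"] by (simp add: c add.assoc)
qed

lemma absd: "(e::real) > 0 \<Longrightarrow> \<bar>(p * e + z) - (q * e + z)\<bar> = e * \<bar>p - q\<bar>"
proof -
  assume e: "e > 0"
  have "(p * e + z) - (q * e + z) = (p - q) * e" by (simp add: left_diff_distrib)
  thus ?thesis using e by (simp add: abs_mult)
qed

lemma W_lip:
  assumes v: "valid_params P" and a1: "assumption1 P" and ra: "risk_aversion P lam alph"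
  shows "\<exists>L. \<forall>r\<in>{0..ev_Rmax P}. lipR L (W P lam alph n r)"
proof (induction n)
  case 0
  obtain LY where LY: "LY-lipschitz_on UNIV (ev_gY P)" using a1 unfolding assumption1_def by blast
  hence LYr: "lipR LY (ev_gY P)" using lipR_iff by blast
  define e where "e = exp (- ev_kY P)"
  define s0 where "s0 = \<bar>min (ev_R0 P + real (ev_T P) * ev_xmax P) (ev_Rmax P)\<bar> + ev_Rmax P"
  define K0 where "K0 = s0 * ev_pref P * LY * e"
  have pref: "ev_pref P > 0" using v by (simp add: valid_params_def)
  have LY0: "LY \<ge> 0" using LYr lipR_def by simp
  have e0: "e > 0" unfolding e_def by simp
  have Rm: "ev_Rmax P > 0" using v by (simp add: valid_params_def)
  have K00: "K0 \<ge> 0" unfolding K0_def s0_def using pref LY0 e0 Rm by simp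
  interpret prob_space "noise_space P" using prob_noise[OF v] .
  have "lipR K0 (W P lam alph 0 r)" if r: "r \<in> {0..ev_Rmax P}" for r
  proof -
    define s where "s = shortage P r"
    have s_le: "\<bar>s\<bar> \<le> s0" using r unfolding s_def s0_def shortage_def by auto
    define l where "l = lam (ev_T P)"
    define a where "a = alph (ev_T P)"
    have la: "0 \<le> l" "l \<le> 1" "0 < a" "a < 1" using ra unfolding risk_aversion_def l_def a_def by auto
    define X where "X p \<omega> = (1 + ev_gh P * s + ev_gY P (p * e + psiY P (ev_T P) \<omega>)) * s * ev_pref P" for p \<omega>
    have WX: "W P lam alph 0 r p = rho (noise_space P) l a (X p)" for p
      unfolding X_def l_def a_def s_def e_def by simp
    have iX: "integrable (noise_space P) (X p)" for p
    proof -
      have "integrable (noise_space P) (\<lambda>\<omega>. (1 + ev_gh P * s) * s * ev_pref P + (s * ev_pref P) * ev_gY P (p * e + psiY P (ev_T P) \<omega>))"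
        using int_lip_psiY[OF v LYr] by (intro Bochner_Integration.integrable_add integrable_mult_right) auto
      thus ?thesis unfolding X_def by (simp add: algebra_simps)
    qed
    show ?thesis unfolding lipR_def
    proof (intro conjI allI K00)
      fix p q
      have "\<bar>rho (noise_space P) l a (X p) - rho (noise_space P) l a (X q)\<bar> \<le> K0 * \<bar>p - q\<bar>"
      proof (rule rho_lip[OF prob_noise[OF v] iX iX _ la])
        fix \<omega>
        have d: "X p \<omega> - X q \<omega> = (s * ev_pref P) * (ev_gY P (p * e + psiY P (ev_T P) \<omega>) - ev_gY P (q * e + psiY P (ev_T P) \<omega>))"
          unfolding X_def by (simp add: algebra_simps)
        have g: "\<bar>ev_gY P (p * e + psiY P (ev_T P) \<omega>) - ev_gY P (q * e + psiY P (ev_T P) \<omega>)\<bar> \<le> LY * (e * \<bar>p - q\<bar>)"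
        proof -
          have "\<bar>ev_gY P (p * e + psiY P (ev_T P) \<omega>) - ev_gY P (q * e + psiY P (ev_T P) \<omega>)\<bar> \<le> LY * \<bar>(p * e + psiY P (ev_T P) \<omega>) - (q * e + psiY P (ev_T P) \<omega>)\<bar>"
            using LYr unfolding lipR_def by blast
          also have "\<bar>(p * e + psiY P (ev_T P) \<omega>) - (q * e + psiY P (ev_T P) \<omega>)\<bar> = e * \<bar>p - q\<bar>"
            by (rule absd[OF e0])
          finally show ?thesis .
        qed
        have "\<bar>X p \<omega> - X q \<omega>\<bar> = (\<bar>s\<bar> * ev_pref P) * \<bar>ev_gY P (p * e + psiY P (ev_T P) \<omega>) - ev_gY P (q * e + psiY P (ev_T P) \<omega>)\<bar>"
          using pref by (simp add: d abs_mult)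
        also have "\<dots> \<le> (s0 * ev_pref P) * (LY * (e * \<bar>p - q\<bar>))"
          using s_le pref g LY0 e0 by (intro mult_mono) auto
        also have "\<dots> = K0 * \<bar>p - q\<bar>" unfolding K0_def by simp
        finally show "\<bar>X p \<omega> - X q \<omega>\<bar> \<le> K0 * \<bar>p - q\<bar>" .
      qed
      thus "\<bar>W P lam alph 0 r p - W P lam alph 0 r q\<bar> \<le> K0 * \<bar>p - q\<bar>" unfolding WX .
    qed
  qed
  then show ?case by blast
next
  case (Suc n)
  then obtain L where L: "\<And>r. r \<in> {0..ev_Rmax P} \<Longrightarrow> lipR L (W P lam alph n r)" by blast
  define e where "e = exp (- ev_kY P)"
  have e0: "e > 0" unfolding e_def by simp
  define K where "K = ev_xmax P + L * e"
  have xm: "ev_xmax P > 0" using v by (simp add: valid_params_def)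
  define t where "t = ev_T P - Suc n"
  define l where "l = lam t"
  define a where "a = alph t"
  have la: "0 \<le> l" "l \<le> 1" "0 < a" "a < 1" using ra unfolding risk_aversion_def l_def a_def t_def by auto
  have "lipR K (W P lam alph (Suc n) r)" if r: "r \<in> {0..ev_Rmax P}" for r
  proof -
    define S where "S = {0 .. min (ev_Rmax P - r) (ev_xmax P)}"
    define f where "f x p = x * p - ev_cf P + rho (noise_space P) l a (\<lambda>\<omega>. W P lam alph n (r + x) (p * e + psi P t \<omega>))" for x p
    have WS: "W P lam alph (Suc n) r = (\<lambda>p. INF x\<in>S. f x p)"
      unfolding f_def S_def l_def a_def t_def e_def by (rule ext) (simp only: W.simps Let_def)
    have L0: "L \<ge> 0" using L[of 0] xm v by (simp add: lipR_def valid_params_def)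
    have K0: "K \<ge> 0" unfolding K_def using xm L0 e0 by simp
    show ?thesis unfolding WS
    proof (rule inf_lip[OF K0])
      fix x assume x: "x \<in> S"
      have rx: "r + x \<in> {0..ev_Rmax P}" using x r unfolding S_def by auto
      note Lx = L[OF rx]
      show "lipR K (f x)" unfolding lipR_def
      proof (intro conjI allI K0)
        fix p q
        have rd: "\<bar>rho (noise_space P) l a (\<lambda>\<omega>. W P lam alph n (r + x) (p * e + psi P t \<omega>))
                  - rho (noise_space P) l a (\<lambda>\<omega>. W P lam alph n (r + x) (q * e + psi P t \<omega>))\<bar> \<le> L * e * \<bar>p - q\<bar>"
        proof (rule rho_lip[OF prob_noise[OF v] int_lip_psi[OF v Lx] int_lip_psi[OF v Lx] _ la])
          fix \<omega>
          have "\<bar>W P lam alph n (r + x) (p * e + psi P t \<omega>) - W P lam alph n (r + x) (q * e + psi P t \<omega>)\<bar>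
                \<le> L * \<bar>(p * e + psi P t \<omega>) - (q * e + psi P t \<omega>)\<bar>"
            using Lx unfolding lipR_def by blast
          also have "\<bar>(p * e + psi P t \<omega>) - (q * e + psi P t \<omega>)\<bar> = e * \<bar>p - q\<bar>"
            by (rule absd[OF e0])
          finally show "\<bar>W P lam alph n (r + x) (p * e + psi P t \<omega>) - W P lam alph n (r + x) (q * e + psi P t \<omega>)\<bar> \<le> L * e * \<bar>p - q\<bar>"
            by (simp add: mult.assoc)
        qed
        have "\<bar>x * p - x * q\<bar> \<le> ev_xmax P * \<bar>p - q\<bar>"
        proof -
          have "\<bar>x * p - x * q\<bar> = \<bar>x\<bar> * \<bar>p - q\<bar>" by (metis abs_mult right_diff_distrib)
          also have "\<dots> \<le> ev_xmax P * \<bar>p - q\<bar>" using x unfolding S_def by (intro mult_right_mono) auto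
          finally show ?thesis .
        qed
        with rd show "\<bar>f x p - f x q\<bar> \<le> K * \<bar>p - q\<bar>" unfolding f_def K_def
          by (simp add: algebra_simps)
      qed
    qed
  qed
  then show ?case by blast
qed


theorem lemma1:
  fixes P :: evparams and lam alph :: "nat \<Rightarrow> real" and t :: nat and r :: real
  assumes "valid_params P"
    and "assumption1 P"
    and "risk_aversion P lam alph"
    and "t \<le> ev_T P"
    and "r \<in> {0 .. ev_Rmax P}"
  shows "\<exists>L. L-lipschitz_on UNIV (\<lambda>p. V P lam alph t r p)"
proof -
  obtain L where "\<forall>r\<in>{0..ev_Rmax P}. lipR L (W P lam alph (ev_T P - t) r)"
    using W_lip[OF assms(1-3)] by blast
  with assms(5) have "L-lipschitz_on UNIV (W P lam alph (ev_T P - t) r)" by (simp add: lipR_iff)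
  thus ?thesis unfolding V_def by (intro exI[of _ L]) simp
qed

end
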